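(* Let $\Sigma:\ \dot x=-(A-M)x+d$ be $\gamma$-robust for some $\gamma>0$, let $u=(A-M)^{-1}\mathbb{1}$ and $u_{\max}=\max_k u_k$. Let $i\neq j$ with $(M)_{ij}=0$, let $m_{ij}>0$, and set $\bar M=M+m_{ij}e_ie_j^{\mathrm T}$. Then the change $\Sigma\mapsto\bar\Sigma:\ \dot x=-(A-\bar M)x+d$ is scalable if and only if $-(A-M-m_{ij}e_ie_j^{\mathrm T})$ is Hurwitz and $$\frac{m_{ij}}{1-m_{ij}e_j^{\mathrm T}(A-M)^{-1}e_i}\,(A-M)^{-1}e_i\,u_j\ \le\ u_{\max}\mathbb{1}-u$$ (elementwise).
   Context: $A=\mathrm{diag}(a_1,\dots,a_N)$ with all $a_i>0$, $M\in\mathbb{R}^{N\times N}$ has zero diagonal and nonnegative off-diagonal entries; $e_i$ is the $i$th standard basis vector and $\mathbb{1}$ the all-ones vector. For $\gamma>0$, a system $\dot x=-(A-M)x+d$ is $\gamma$-robust if $-(A-M)$ is Hurwitz and for every bounded disturbance $d$, the solution with $x(0)=0$ satisfies $\max_{i}|x_i(t)|\le\gamma\max_i\sup_{s\ge0}|d_i(s)|$ for all $t\ge0$. A structural change $\Sigma\mapsto\bar\Sigma$ is called scalable if, for every $\gamma>0$ for which $\Sigma$ is $\gamma$-robust, $\bar\Sigma$ is $\gamma$-robust. *)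

theory Defs
  imports "HOL-Analysis.Analysis"
begin

definition hurwitz :: "real^'n^'n \<Rightarrow> bool" where
  "hurwitz B \<longleftrightarrow>
     (\<forall>z::complex. det (\<chi> i j. (if i = j then z else 0) - complex_of_real (B $ i $ j)) = 0
        \<longrightarrow> Re z < 0)"

definition dist_norm :: "(real \<Rightarrow> real^'n) \<Rightarrow> real" where
  "dist_norm d = (SUP s\<in>{0..}. Max (range (\<lambda>i. \<bar>d s $ i\<bar>)))"

definition bounded_disturbance :: "(real \<Rightarrow> real^'n) \<Rightarrow> bool" where
  "bounded_disturbance d \<longleftrightarrow> (\<exists>K. \<forall>s\<ge>0. \<forall>i. \<bar>d s $ i\<bar> \<le> K)"

definition is_solution :: "real^'n^'n \<Rightarrow> (real \<Rightarrow> real^'n) \<Rightarrow> (real \<Rightarrow> real^'n) \<Rightarrow> bool" where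
  "is_solution AM d x \<longleftrightarrow> x 0 = 0 \<and>
     (\<forall>t\<ge>0. (x has_vector_derivative (- (AM *v x t) + d t)) (at t within {0..}))"

definition robust :: "real^'n^'n \<Rightarrow> real \<Rightarrow> bool" where
  "robust AM \<gamma> \<longleftrightarrow> hurwitz (- AM) \<and>
     (\<forall>d x. bounded_disturbance d \<longrightarrow> is_solution AM d x \<longrightarrow>
        (\<forall>t\<ge>0. \<forall>i. \<bar>x t $ i\<bar> \<le> \<gamma> * dist_norm d))"

definition scalable :: "real^'n^'n \<Rightarrow> real^'n^'n \<Rightarrow> bool" where
  "scalable AM AM' \<longleftrightarrow> (\<forall>\<gamma>>0. robust AM \<gamma> \<longrightarrow> robust AM' \<gamma>)"

end

theory Submission
  imports Defs
begin


lemma minv_right: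
  fixes B :: "real^'n^'n"
  assumes "det B \<noteq> 0"
  shows "B ** matrix_inv B = mat 1" "matrix_inv B ** B = mat 1"
proof -
  have "invertible B" using assms invertible_det_nz by blast
  then have "B ** matrix_inv B = mat 1 \<and> matrix_inv B ** B = mat 1"
    unfolding invertible_def matrix_inv_def by (rule someI_ex)
  then show "B ** matrix_inv B = mat 1" "matrix_inv B ** B = mat 1" by auto
qed

lemma mv: "((K::real^'n^'n) *v x)$k = (\<Sum>l\<in>UNIV. K$k$l * x$l)"
  by (simp add: matrix_vector_mult_def)

lemma monoZ:
  fixes K :: "real^'n^'n"
  assumes Z: "\<forall>k l. k\<noteq>l \<longrightarrow> K$k$l \<le> 0" and v: "\<forall>k. v$k > 0" and Kv: "\<forall>k. (K *v v)$k > 0"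
    and x: "\<forall>k. (K *v x)$k \<ge> 0"
  shows "\<forall>k. x$k \<ge> 0"
proof (rule ccontr)
  assume "\<not> (\<forall>k. x$k \<ge> 0)"
  then obtain k' where k': "x$k' < 0" using not_le by blast
  define r where "r l = x$l / v$l" for l
  have fin: "finite (range r)" by simp
  have "Min (range r) \<in> range r" using Min_in[OF fin] by blast
  then obtain k where k: "r k = Min (range r)" by (metis imageE)
  have rmin: "r k \<le> r l" for l using k fin by simp
  have "r k' < 0" using k' v by (simp add: r_def divide_neg_pos)
  then have rk: "r k < 0" using rmin[of k'] by simp
  have xl: "x$l = v$l * r l" for l using v[rule_format, of l] by (simp add: r_def)
  have "(K *v x)$k = (\<Sum>l\<in>UNIV. K$k$l * x$l)" by (rule mv)
  also have "\<dots> \<le> (\<Sum>l\<in>UNIV. K$k$l * (v$l * r k))"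
  proof (rule sum_mono)
    fix l
    show "K$k$l * x$l \<le> K$k$l * (v$l * r k)"
    proof (cases "l = k")
      case True then show ?thesis using xl by simp
    next
      case False
      then have "K$k$l \<le> 0" using Z by auto
      moreover have "v$l * r k \<le> x$l" using xl rmin[of l] v by (simp add: mult_left_mono)
      ultimately show ?thesis by (simp add: mult_left_mono_neg)
    qed
  qed
  also have "\<dots> = r k * (K *v v)$k" by (simp add: mv sum_distrib_left algebra_simps)
  also have "\<dots> < 0" using rk Kv by (simp add: mult_neg_pos)
  finally show False using x by (meson not_le)
qed

lemma posZ:
  fixes K :: "real^'n^'n"
  assumes Z: "\<forall>k l. k\<noteq>l \<longrightarrow> K$k$l \<le> 0" and w: "K *v w = (\<chi> k. 1)" and wn: "\<forall>k. w$k \<ge> 0"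
  shows "\<forall>k. w$k > 0"
proof (rule ccontr)
  assume "\<not> (\<forall>k. w$k > 0)"
  then obtain k where k: "w$k = 0" using wn less_eq_real_def by metis
  have "(K *v w)$k = (\<Sum>l\<in>UNIV. K$k$l * w$l)" by (rule mv)
  also have "\<dots> \<le> 0"
  proof (rule sum_nonpos)
    fix l show "K$k$l * w$l \<le> 0"
      using Z wn k by (cases "l = k") (auto simp: mult_nonpos_nonneg)
  qed
  finally show False using w by simp
qed

definition Kt :: "real^'n^'n \<Rightarrow> real \<Rightarrow> real^'n^'n" where
  "Kt B \<tau> = (\<chi> i j. B$i$j + (if i = j then \<tau> else 0))"

lemma Kt_mv: "(Kt B \<tau> *v v)$k = (B *v v)$k + \<tau> * v$k"
proof -
  have "(Kt B \<tau> *v v)$k = (\<Sum>l\<in>UNIV. B$k$l * v$l + (if k = l then \<tau> * v$l else 0))"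
    by (auto simp: Kt_def mv distrib_right intro!: sum.cong)
  also have "\<dots> = (B *v v)$k + \<tau> * v$k"
    by (simp add: sum.distrib mv)
  finally show ?thesis .
qed

lemma Kt_Z: "\<forall>k l. k\<noteq>l \<longrightarrow> B$k$l \<le> 0 \<Longrightarrow> \<forall>k l. k\<noteq>l \<longrightarrow> Kt B \<tau> $k$l \<le> 0"
  by (simp add: Kt_def)

lemma Kt0: "Kt B 0 = B" by (simp add: Kt_def vec_eq_iff)

lemma semipos:
  fixes B :: "real^'n^'n"
  assumes Z: "\<forall>k l. k\<noteq>l \<longrightarrow> B$k$l \<le> 0" and dt: "\<forall>\<tau>\<ge>0. det (Kt B \<tau>) \<noteq> 0"
  shows "\<exists>v. (\<forall>k. v$k > 0) \<and> (\<forall>k. (B *v v)$k > 0)"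
proof -
  define P where "P \<tau> \<longleftrightarrow> (\<exists>v. (\<forall>k. v$k > 0) \<and> (\<forall>k. (B *v v)$k + \<tau> * v$k > 0))" for \<tau>
  define S where "S = (\<Sum>k\<in>UNIV. \<Sum>l\<in>UNIV. \<bar>B$k$l\<bar>)"
  have big: "P (S + 1)"
  proof -
    have "(B *v (\<chi> k. 1))$k + (S + 1) * 1 > 0" for k
    proof -
      have "(B *v (\<chi> k. 1))$k = (\<Sum>l\<in>UNIV. B$k$l)" by (simp add: mv)
      also have "\<dots> \<ge> - (\<Sum>l\<in>UNIV. \<bar>B$k$l\<bar>)"
        by (simp add: sum_negf[symmetric] sum_mono)
      finally have a: "(B *v (\<chi> k. 1))$k \<ge> - (\<Sum>l\<in>UNIV. \<bar>B$k$l\<bar>)" .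
      have "(\<Sum>l\<in>UNIV. \<bar>B$k$l\<bar>) \<le> S" unfolding S_def
        by (rule member_le_sum) (auto intro: sum_nonneg)
      then show ?thesis using a by simp
    qed
    then show ?thesis unfolding P_def by (intro exI[of _ "\<chi> k. 1"]) simp
  qed
  have up: "P \<tau>'" if "P \<tau>" "\<tau> \<le> \<tau>'" for \<tau> \<tau>'
  proof -
    obtain v where v: "\<forall>k. v$k > 0" "\<forall>k. (B *v v)$k + \<tau> * v$k > 0" using \<open>P \<tau>\<close> P_def by blast
    have "(B *v v)$k + \<tau>' * v$k > 0" for k
    proof -
      have "\<tau> * v$k \<le> \<tau>' * v$k" using that(2) v(1) by (simp add: mult_right_mono less_imp_le)
      then show ?thesis using v(2) by (smt (verit))
    qed
    then show ?thesis using v(1) P_def by blast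
  qed
  have opn: "\<exists>\<delta>>0. P (\<tau> - \<delta>)" if "P \<tau>" for \<tau>
  proof -
    obtain v where v: "\<forall>k. v$k > 0" "\<forall>k. (B *v v)$k + \<tau> * v$k > 0" using \<open>P \<tau>\<close> P_def by blast
    define q where "q k = ((B *v v)$k + \<tau> * v$k) / v$k" for k
    have qpos: "q k > 0" for k using v by (simp add: q_def)
    have fin: "finite (range q)" by simp
    have "Min (range q) \<in> range q" using Min_in[OF fin] by blast
    then have mpos: "Min (range q) > 0" using qpos by auto
    define \<delta> where "\<delta> = Min (range q) / 2"
    have "(B *v v)$k + (\<tau> - \<delta>) * v$k > 0" for k
    proof -
      have "q k \<ge> Min (range q)" using fin by simp
      then have "q k - \<delta> > 0" using mpos unfolding \<delta>_def by linarith
      then have "v$k * (q k - \<delta>) > 0" using v(1) by simp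
      moreover have "v$k * (q k - \<delta>) = (B *v v)$k + (\<tau> - \<delta>) * v$k"
        using v(1)[rule_format, of k] by (simp add: q_def field_simps)
      ultimately show ?thesis by simp
    qed
    then show ?thesis using v(1) mpos unfolding P_def \<delta>_def by (intro exI[of _ "Min (range q) / 2"]) auto
  qed
  have cls: "P \<tau>" if "\<tau> \<ge> 0" "\<forall>\<tau>'>\<tau>. P \<tau>'" for \<tau>
  proof -
    have "det (Kt B \<tau>) \<noteq> 0" using dt that(1) by blast
    then have "Kt B \<tau> ** matrix_inv (Kt B \<tau>) = mat 1" by (rule minv_right)
    define w where "w = matrix_inv (Kt B \<tau>) *v (\<chi> k. 1)"
    have Kw: "Kt B \<tau> *v w = (\<chi> k. 1)" unfolding w_def
      by (simp add: matrix_vector_mul_assoc \<open>Kt B \<tau> ** matrix_inv (Kt B \<tau>) = mat 1\<close>)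
    define c where "c = (\<Sum>k\<in>UNIV. \<bar>w$k\<bar>)"
    have c0: "c \<ge> 0" unfolding c_def by (simp add: sum_nonneg)
    define \<delta> where "\<delta> = 1 / (c + 1)"
    have d0: "\<delta> > 0" using c0 by (simp add: \<delta>_def)
    have "P (\<tau> + \<delta>)" using that(2) d0 by simp
    then obtain v where v: "\<forall>k. v$k > 0" "\<forall>k. (B *v v)$k + (\<tau> + \<delta>) * v$k > 0" using P_def by blast
    have Kv: "\<forall>k. (Kt B (\<tau> + \<delta>) *v v)$k > 0" using v(2) by (simp add: Kt_mv)
    have "\<forall>k. (Kt B (\<tau> + \<delta>) *v w)$k \<ge> 0"
    proof
      fix k
      have wk: "\<bar>w$k\<bar> \<le> c" unfolding c_def by (rule member_le_sum) auto
      have "\<delta> * \<bar>w$k\<bar> < 1"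
      proof -
        have "\<delta> * \<bar>w$k\<bar> \<le> \<delta> * c" using wk d0 by (simp add: mult_left_mono)
        also have "\<dots> < 1" using c0 by (simp add: \<delta>_def field_simps)
        finally show ?thesis .
      qed
      moreover have "(Kt B (\<tau> + \<delta>) *v w)$k = 1 + \<delta> * w$k"
      proof -
        have "(Kt B \<tau> *v w)$k = 1" using Kw by simp
        then show ?thesis by (simp add: Kt_mv algebra_simps)
      qed
      moreover have "- (\<delta> * \<bar>w$k\<bar>) \<le> \<delta> * w$k" using d0
        by (smt (verit) abs_ge_minus_self mult_minus_right mult_left_mono)
      ultimately show "(Kt B (\<tau> + \<delta>) *v w)$k \<ge> 0" by linarith
    qed
    then have wn: "\<forall>k. w$k \<ge> 0" using monoZ[OF Kt_Z[OF Z] v(1) Kv] by blast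
    have wp: "\<forall>k. w$k > 0" using posZ[OF Kt_Z[OF Z] Kw wn] .
    have "(B *v w)$k + \<tau> * w$k > 0" for k
      using Kw by (simp add: Kt_mv[symmetric] vec_eq_iff)
    then show ?thesis using wp P_def by blast
  qed
  have "P 0"
  proof (rule ccontr)
    assume n0: "\<not> P 0"
    define T where "T = {\<tau>. \<tau> \<ge> 0 \<and> P \<tau>}"
    have Tne: "T \<noteq> {}" using big T_def
      by (metis (mono_tags, lifting) add_nonneg_nonneg empty_iff mem_Collect_eq zero_le_one abs_ge_zero sum_nonneg S_def)
    have Tb: "bdd_below T" unfolding T_def by (rule bdd_belowI[of _ 0]) auto
    define s where "s = Inf T"
    have s0: "s \<ge> 0" unfolding s_def using Tne by (intro cInf_greatest) (auto simp: T_def)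
    have "\<forall>\<tau>'>s. P \<tau>'"
    proof (intro allI impI)
      fix \<tau>' assume "\<tau>' > s"
      then obtain t where "t \<in> T" "t < \<tau>'" using cInf_less_iff[OF Tne Tb] s_def by blast
      then show "P \<tau>'" using up T_def by auto
    qed
    then have Ps: "P s" using cls s0 by blast
    then obtain \<delta> where d: "\<delta> > 0" "P (s - \<delta>)" using opn by blast
    show False
    proof (cases "s - \<delta> \<ge> 0")
      case True
      then have "s - \<delta> \<in> T" using d T_def by auto
      then have "s \<le> s - \<delta>" unfolding s_def using Tb by (rule cInf_lower)
      then show False using d by simp
    next
      case False
      then show False using up[OF d(2)] n0 by simp
    qed
  qed
  then show ?thesis unfolding P_def by simp
qed

lemma vd_comp:
  assumes "(y has_vector_derivative f) F"
  shows "((\<lambda>t. y t $ k) has_real_derivative f $ k) F"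
proof -
  have "((\<lambda>t. y t $ k) has_derivative (\<lambda>h. (h *\<^sub>R f) $ k)) F"
    using bounded_linear.has_derivative[OF bounded_linear_vec_nth assms[unfolded has_vector_derivative_def]] by simp
  moreover have "(\<lambda>h. (h *\<^sub>R f) $ k) = (*) (f $ k)" by (auto simp: mult.commute)
  ultimately show ?thesis by (simp add: has_field_derivative_def)
qed

lemma det_of_real:
  fixes X :: "real^'n^'n"
  shows "det (\<chi> i j. complex_of_real (X$i$j)) = complex_of_real (det X)"
  unfolding det_def by (simp add: of_real_sum of_real_mult of_real_prod)

lemma hurwitz_Kt:
  fixes B :: "real^'n^'n"
  assumes "hurwitz (- B)" "\<tau> \<ge> 0"
  shows "det (Kt B \<tau>) \<noteq> 0"
proof
  assume "det (Kt B \<tau>) = 0"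
  have "(\<chi> i j. (if i = j then complex_of_real \<tau> else 0) - complex_of_real ((- B) $ i $ j))
      = (\<chi> i j. complex_of_real (Kt B \<tau> $i$j))"
    by (auto simp: Kt_def vec_eq_iff)
  then have "det (\<chi> i j. (if i = j then complex_of_real \<tau> else 0) - complex_of_real ((- B) $ i $ j)) = 0"
    using \<open>det (Kt B \<tau>) = 0\<close> by (simp add: det_of_real)
  then have "Re (complex_of_real \<tau>) < 0" using assms(1) unfolding hurwitz_def by blast
  then show False using assms(2) by simp
qed

lemma hurwitz_pos:
  fixes B :: "real^'n^'n"
  assumes Z: "\<forall>k l. k\<noteq>l \<longrightarrow> B$k$l \<le> 0" and H: "hurwitz (- B)"
  shows "det B \<noteq> 0" "B *v (matrix_inv B *v (\<chi> k. 1)) = (\<chi> k. 1)"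
    "\<forall>k. (matrix_inv B *v (\<chi> k. 1)) $ k > 0"
proof -
  show d: "det B \<noteq> 0" using hurwitz_Kt[OF H, of 0] by (simp add: Kt0)
  show e: "B *v (matrix_inv B *v (\<chi> k. 1)) = (\<chi> k. 1)"
    by (simp add: matrix_vector_mul_assoc minv_right[OF d])
  obtain v where v: "\<forall>k. v$k > 0" "\<forall>k. (B *v v)$k > 0"
    using semipos[OF Z] hurwitz_Kt[OF H] by blast
  have "\<forall>k. (matrix_inv B *v (\<chi> k. 1)) $ k \<ge> 0"
    by (rule monoZ[OF Z v]) (simp add: e)
  then show "\<forall>k. (matrix_inv B *v (\<chi> k. 1)) $ k > 0" by (rule posZ[OF Z e])
qed

lemma invariance:
  fixes K :: "real^'n^'n" and y f :: "real \<Rightarrow> real^'n"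
  assumes Z: "\<forall>k l. k\<noteq>l \<longrightarrow> K$k$l \<le> 0" and u: "\<forall>k. u$k > 0" and Ku: "K *v u = (\<chi> k. 1)"
    and e: "\<epsilon> > 0"
    and der: "\<forall>t\<ge>0. (y has_vector_derivative f t) (at t within {0..})"
    and fb: "\<forall>t\<ge>0. \<forall>k. f t $ k \<ge> \<epsilon> - (K *v y t)$k"
    and y0: "\<forall>k. y 0 $ k > 0"
  shows "\<forall>t\<ge>0. \<forall>k. y t $ k > 0"
proof (rule ccontr)
  assume "\<not> ?thesis"
  then obtain t0 k0 where t0: "t0 \<ge> 0" "y t0 $ k0 \<le> 0" by (meson not_le)
  define Z where "Z = (\<Union>k\<in>UNIV. {0..} \<inter> (\<lambda>t. y t $ k) -` {..0})"
  have cont: "continuous_on {0..} y"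
    unfolding continuous_on_eq_continuous_within
    using der has_vector_derivative_continuous by (metis atLeast_iff)
  have "closed Z" unfolding Z_def
    by (intro closed_UN finite_UNIV ballI continuous_closed_preimage continuous_on_component cont) auto
  have t0Z: "t0 \<in> Z" using t0 by (auto simp: Z_def)
  have Zb: "bdd_below Z" by (rule bdd_belowI[of _ 0]) (auto simp: Z_def)
  define s where "s = Inf Z"
  have sZ: "s \<in> Z" unfolding s_def using t0Z Zb \<open>closed Z\<close> closed_contains_Inf by blast
  then obtain k1 where k1: "s \<ge> 0" "y s $ k1 \<le> 0" by (auto simp: Z_def)
  have "s \<noteq> 0" using k1 y0 by (metis not_le)
  then have sp: "s > 0" using k1 by simp
  have before: "y t $ l > 0" if "0 \<le> t" "t < s" for t l
  proof (rule ccontr)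
    assume "\<not> y t $ l > 0"
    then have "t \<in> Z" using that by (auto simp: Z_def not_less)
    then have "s \<le> t" unfolding s_def using Zb by (rule cInf_lower)
    then show False using that by simp
  qed
  define r where "r l = y s $ l / u $ l" for l
  have fin: "finite (range r)" by simp
  have "Min (range r) \<in> range r" using Min_in[OF fin] by blast
  then obtain k where k: "r k = Min (range r)" by (metis imageE)
  have rmin: "r k \<le> r l" for l using k fin by simp
  have yl: "y s $ l = u$l * r l" for l using u[rule_format, of l] by (simp add: r_def)
  have "r k1 \<le> 0" using k1 u by (simp add: r_def divide_nonpos_pos)
  then have rk: "r k \<le> 0" using rmin[of k1] by simp
  then have yk: "y s $ k \<le> 0" using yl[of k] u[rule_format, of k] by (simp add: mult_nonneg_nonpos)
  have "(K *v y s)$k = (\<Sum>l\<in>UNIV. K$k$l * y s $ l)" by (rule mv)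
  also have "\<dots> \<le> (\<Sum>l\<in>UNIV. K$k$l * (u$l * r k))"
  proof (rule sum_mono)
    fix l
    show "K$k$l * y s $ l \<le> K$k$l * (u$l * r k)"
    proof (cases "l = k")
      case True then show ?thesis using yl by simp
    next
      case False
      then have "K$k$l \<le> 0" using Z by auto
      moreover have "u$l * r k \<le> y s $ l" using yl rmin[of l] u by (simp add: mult_left_mono)
      ultimately show ?thesis by (simp add: mult_left_mono_neg)
    qed
  qed
  also have "\<dots> = r k * (K *v u)$k" by (simp add: mv sum_distrib_left algebra_simps)
  also have "\<dots> = r k" using Ku by simp
  finally have "(K *v y s)$k \<le> 0" using rk by simp
  then have fpos: "f s $ k > 0" using fb k1(1) e by (smt (verit))
  have "((\<lambda>t. y t $ k) has_real_derivative f s $ k) (at s within {0..})"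
    using der k1(1) vd_comp by blast
  then obtain d where d: "d > 0" "\<forall>h>0. s - h \<in> {0..} \<longrightarrow> h < d \<longrightarrow> y (s - h) $ k < y s $ k"
    using has_real_derivative_pos_inc_left[OF _ fpos] by blast
  define h where "h = min d s / 2"
  have h: "h > 0" "h < d" "s - h \<ge> 0" using d sp by (auto simp: h_def)
  then have "y (s - h) $ k < y s $ k" using d by auto
  moreover have "y (s - h) $ k > 0" using before[of "s - h" k] h by simp
  ultimately show False using yk by simp
qed

lemma dist_bound:
  assumes "bounded_disturbance d" "s \<ge> 0"
  shows "\<bar>d s $ k\<bar> \<le> dist_norm d"
proof -
  obtain C where C: "\<forall>s\<ge>0. \<forall>i. \<bar>d s $ i\<bar> \<le> C" using assms(1) unfolding bounded_disturbance_def by blast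
  have fin: "finite (range (\<lambda>i. \<bar>d s $ i\<bar>))" for s by simp
  have "bdd_above ((\<lambda>s. Max (range (\<lambda>i. \<bar>d s $ i\<bar>))) ` {0..})"
    by (rule bdd_aboveI[of _ C]) (use C fin in \<open>auto simp: Max_le_iff\<close>)
  then have "Max (range (\<lambda>i. \<bar>d s $ i\<bar>)) \<le> dist_norm d"
    unfolding dist_norm_def using assms(2) by (intro cSUP_upper) auto
  moreover have "\<bar>d s $ k\<bar> \<le> Max (range (\<lambda>i. \<bar>d s $ i\<bar>))" using fin by simp
  ultimately show ?thesis by linarith
qed

lemma robust_upper:
  fixes K :: "real^'n^'n"
  assumes Z: "\<forall>k l. k\<noteq>l \<longrightarrow> K$k$l \<le> 0" and u: "\<forall>k. u$k > 0" and Ku: "K *v u = (\<chi> k. 1)"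
    and H: "hurwitz (- K)" and ug: "\<forall>k. u$k \<le> \<gamma>"
  shows "robust K \<gamma>"
  unfolding robust_def
proof (intro conjI H allI impI)
  fix d x t i
  assume bd: "bounded_disturbance d" and sol: "is_solution K d x" and t: "t \<ge> (0::real)"
  define D where "D = dist_norm d"
  have db: "\<bar>d s $ k\<bar> \<le> D" if "s \<ge> 0" for s k using dist_bound[OF bd that] D_def by simp
  have D0: "D \<ge> 0" using db[of 0 i] by simp
  have x0: "x 0 = 0" and der: "\<forall>t\<ge>0. (x has_vector_derivative (- (K *v x t) + d t)) (at t within {0..})"
    using sol unfolding is_solution_def by auto
  have main: "\<bar>x t $ i\<bar> \<le> (D + \<epsilon>) * u$i" if e: "\<epsilon> > 0" for \<epsilon>
  proof -
    have a: "\<forall>t\<ge>0. \<forall>k. ((D + \<epsilon>) *\<^sub>R u - x t) $ k > 0"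
    proof (rule invariance[OF Z u Ku e, where f = "\<lambda>t. 0 - (- (K *v x t) + d t)"])
      show "\<forall>t\<ge>0. ((\<lambda>t. (D + \<epsilon>) *\<^sub>R u - x t) has_vector_derivative 0 - (- (K *v x t) + d t)) (at t within {0..})"
        using has_vector_derivative_diff[OF has_vector_derivative_const der[rule_format]] by blast
      show "\<forall>t\<ge>0. \<forall>k. \<epsilon> - (K *v ((D + \<epsilon>) *\<^sub>R u - x t)) $ k \<le> (0 - (- (K *v x t) + d t)) $ k"
        using db Ku by (auto simp: algebra_simps) (smt (verit) abs_ge_self)
      show "\<forall>k. 0 < ((D + \<epsilon>) *\<^sub>R u - x 0) $ k" using x0 u D0 e by simp
    qed
    have b: "\<forall>t\<ge>0. \<forall>k. ((D + \<epsilon>) *\<^sub>R u + x t) $ k > 0"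
    proof (rule invariance[OF Z u Ku e, where f = "\<lambda>t. 0 + (- (K *v x t) + d t)"])
      show "\<forall>t\<ge>0. ((\<lambda>t. (D + \<epsilon>) *\<^sub>R u + x t) has_vector_derivative 0 + (- (K *v x t) + d t)) (at t within {0..})"
        using has_vector_derivative_add[OF has_vector_derivative_const der[rule_format]] by blast
      show "\<forall>t\<ge>0. \<forall>k. \<epsilon> - (K *v ((D + \<epsilon>) *\<^sub>R u + x t)) $ k \<le> (0 + (- (K *v x t) + d t)) $ k"
        using db Ku by (auto simp: algebra_simps) (smt (verit) abs_ge_minus_self)
      show "\<forall>k. 0 < ((D + \<epsilon>) *\<^sub>R u + x 0) $ k" using x0 u D0 e by simp
    qed
    show ?thesis using a[rule_format, OF t, of i] b[rule_format, OF t, of i] by auto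
  qed
  have "\<bar>x t $ i\<bar> \<le> D * u$i"
  proof (rule field_le_epsilon)
    fix e :: real assume "e > 0"
    then have "\<bar>x t $ i\<bar> \<le> (D + e / u$i) * u$i" using main u by simp
    also have "\<dots> = D * u$i + e" using u[rule_format, of i] by (simp add: field_simps)
    finally show "\<bar>x t $ i\<bar> \<le> D * u$i + e" .
  qed
  also have "\<dots> \<le> \<gamma> * D" using ug D0 by (simp add: mult.commute mult_left_mono)
  finally show "\<bar>x t $ i\<bar> \<le> \<gamma> * dist_norm d" by (simp add: D_def)
qed

lemma robust_lower_aux:
  fixes K :: "real^'n^'n"
  assumes R: "robust K \<gamma>" and g: "\<gamma> > 0" and Ku: "K *v u = (\<chi> k. 1)" and e: "\<epsilon> > 0" and t: "t \<ge> 0"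
  shows "(1 - exp (- \<epsilon> * t)) * \<bar>u$k\<bar> \<le> \<gamma> * (1 + \<epsilon> * (\<Sum>l\<in>UNIV. \<bar>u$l\<bar>))"
proof -
  define c where "c = (\<Sum>l\<in>UNIV. \<bar>u$l\<bar>)"
  define x where "x t = (1 - exp (- \<epsilon> * t)) *\<^sub>R u" for t
  define d where "d t = (\<epsilon> * exp (- \<epsilon> * t)) *\<^sub>R u + (1 - exp (- \<epsilon> * t)) *\<^sub>R (\<chi> k. (1::real))" for t
  have dk: "\<bar>d s $ i\<bar> \<le> 1 + \<epsilon> * c" if "s \<ge> 0" for s i
  proof -
    have e1: "exp (- \<epsilon> * s) \<le> 1" "exp (- \<epsilon> * s) > 0" using e that by auto
    have ui: "\<bar>u$i\<bar> \<le> c" unfolding c_def by (rule member_le_sum) auto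
    have "d s $ i = \<epsilon> * exp (- \<epsilon> * s) * u$i + (1 - exp (- \<epsilon> * s))" by (simp add: d_def)
    then have "\<bar>d s $ i\<bar> \<le> \<bar>\<epsilon> * exp (- \<epsilon> * s) * u$i\<bar> + \<bar>1 - exp (- \<epsilon> * s)\<bar>"
      by (simp add: abs_triangle_ineq)
    moreover have "\<bar>\<epsilon> * exp (- \<epsilon> * s) * u$i\<bar> = \<epsilon> * exp (- \<epsilon> * s) * \<bar>u$i\<bar>"
      using e by (simp add: abs_mult)
    moreover have "\<bar>1 - exp (- \<epsilon> * s)\<bar> = 1 - exp (- \<epsilon> * s)" using e1 by simp
    moreover have "\<epsilon> * exp (- \<epsilon> * s) * \<bar>u$i\<bar> \<le> \<epsilon> * 1 * c"
      using e e1 ui by (intro mult_mono) auto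
    moreover have "c \<ge> 0" using order_trans[OF abs_ge_zero ui] .
    ultimately show ?thesis using e1 e by (smt (verit) mult_1_right mult_nonneg_nonneg)
  qed
  have bd: "bounded_disturbance d" unfolding bounded_disturbance_def using dk by blast
  have "is_solution K d x"
    unfolding is_solution_def
  proof (intro conjI allI impI)
    show "x 0 = 0" by (simp add: x_def)
    fix t :: real
    have "((\<lambda>t. 1 - exp (- \<epsilon> * t)) has_real_derivative \<epsilon> * exp (- \<epsilon> * t)) (at t within {0..})"
      by (auto intro!: derivative_eq_intros)
    then have "((\<lambda>t. (1 - exp (- \<epsilon> * t)) *\<^sub>R u) has_vector_derivative (\<epsilon> * exp (- \<epsilon> * t)) *\<^sub>R u) (at t within {0..})"
      using has_vector_derivative_scaleR[OF _ has_vector_derivative_const, of _ _ t "{0..}" u] by simp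
    moreover have "(\<epsilon> * exp (- \<epsilon> * t)) *\<^sub>R u = - (K *v x t) + d t"
      by (simp add: x_def d_def matrix_vector_mult_scaleR Ku)
    ultimately show "(x has_vector_derivative - (K *v x t) + d t) (at t within {0..})"
      by (simp add: x_def[abs_def])
  qed
  then have "\<bar>x t $ k\<bar> \<le> \<gamma> * dist_norm d" using R bd t unfolding robust_def by blast
  also have "dist_norm d \<le> 1 + \<epsilon> * c"
    unfolding dist_norm_def using dk by (intro cSUP_least) (auto simp: Max_le_iff)
  then have "\<gamma> * dist_norm d \<le> \<gamma> * (1 + \<epsilon> * c)" using g by simp
  finally have "\<bar>x t $ k\<bar> \<le> \<gamma> * (1 + \<epsilon> * c)" .
  moreover have "\<bar>x t $ k\<bar> = (1 - exp (- \<epsilon> * t)) * \<bar>u$k\<bar>"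
    using e t by (simp add: x_def abs_mult)
  ultimately show ?thesis by (simp add: c_def)
qed

lemma robust_lower:
  fixes K :: "real^'n^'n"
  assumes R: "robust K \<gamma>" and g: "\<gamma> > 0" and Ku: "K *v u = (\<chi> k. 1)"
  shows "\<bar>u$k\<bar> \<le> \<gamma>"
proof (rule ccontr)
  assume na: "\<not> \<bar>u$k\<bar> \<le> \<gamma>"
  define a where "a = \<bar>u$k\<bar>"
  have ag: "a > \<gamma>" using na a_def by simp
  define c where "c = (\<Sum>l\<in>UNIV. \<bar>u$l\<bar>)"
  have c0: "c \<ge> 0" unfolding c_def by (simp add: sum_nonneg)
  define \<epsilon> where "\<epsilon> = (a - \<gamma>) / (2 * (\<gamma> * c + 1))"
  have "\<gamma> * c \<ge> 0" using g c0 by simp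
  then have den: "\<gamma> * c + 1 > 0" by linarith
  have e: "\<epsilon> > 0" using ag den by (simp add: \<epsilon>_def)
  have ge: "\<gamma> * (1 + \<epsilon> * c) \<le> (a + \<gamma>) / 2"
  proof -
    have "\<gamma> * \<epsilon> * c = (a - \<gamma>) / 2 * (\<gamma> * c / (\<gamma> * c + 1))" using den by (simp add: \<epsilon>_def field_simps)
    also have "\<dots> \<le> (a - \<gamma>) / 2 * 1"
      using ag den g c0 by (intro mult_left_mono) (auto simp: field_simps)
    finally show ?thesis by (simp add: algebra_simps)
  qed
  define \<delta> where "\<delta> = (a - \<gamma>) / (4 * a)"
  have a0: "a > 0" using ag g by simp
  have d0: "\<delta> > 0" using ag a0 by (simp add: \<delta>_def)
  define t where "t = - ln \<delta> / \<epsilon>"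
  have et: "exp (- \<epsilon> * t) = \<delta>" using e d0 by (simp add: t_def)
  have "\<delta> \<le> 1" using ag a0 g by (simp add: \<delta>_def field_simps)
  then have "ln \<delta> \<le> 0" using d0 by simp
  then have t0: "t \<ge> 0" unfolding t_def using e by (intro divide_nonneg_pos) auto
  have "(1 - \<delta>) * a \<le> \<gamma> * (1 + \<epsilon> * c)"
    using robust_lower_aux[OF R g Ku e t0, of k] et by (simp add: a_def c_def)
  moreover have "(1 - \<delta>) * a = (3 * a + \<gamma>) / 4" using a0 by (simp add: \<delta>_def field_simps)
  ultimately have "(3 * a + \<gamma>) / 4 \<le> (a + \<gamma>) / 2" using ge by linarith
  then show False using ag by (simp add: field_simps)
qed

theorem mainTheorem7:
  fixes A M :: "real^'n^'n" and \<gamma> m :: real and i j :: 'n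
  assumes A_diag: "\<forall>k l. k \<noteq> l \<longrightarrow> A $ k $ l = 0"
    and A_pos: "\<forall>k. A $ k $ k > 0"
    and M_diag: "\<forall>k. M $ k $ k = 0"
    and M_nonneg: "\<forall>k l. M $ k $ l \<ge> 0"
    and gamma_pos: "\<gamma> > 0"
    and rob: "robust (A - M) \<gamma>"
    and ij: "i \<noteq> j"
    and Mij: "M $ i $ j = 0"
    and m_pos: "m > 0"
  shows "let Minv = matrix_inv (A - M);
             u = Minv *v (\<chi> k. 1);
             umax = Max (range (\<lambda>k. u $ k));
             Mbar = (\<chi> k l. M $ k $ l + (if k = i \<and> l = j then m else 0))
         in scalable (A - M) (A - Mbar) \<longleftrightarrow>
            hurwitz (- (A - Mbar)) \<and>
            (\<forall>k. m / (1 - m * Minv $ j $ i) * Minv $ k $ i * u $ j \<le> umax - u $ k)"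
proof -
  define B where "B = A - M"
  define Minv where "Minv = matrix_inv B"
  define u where "u = Minv *v (\<chi> k. (1::real))"
  define umax where "umax = Max (range (\<lambda>k. u $ k))"
  define Mbar where "Mbar = (\<chi> k l. M $ k $ l + (if k = i \<and> l = j then m else 0))"
  define Bb where "Bb = A - Mbar"
  have ZB: "\<forall>k l. k\<noteq>l \<longrightarrow> B$k$l \<le> 0" using A_diag M_nonneg by (simp add: B_def)
  have ZBb: "\<forall>k l. k\<noteq>l \<longrightarrow> Bb$k$l \<le> 0" proof (intro allI impI)
    fix k l :: 'n assume kl: "k \<noteq> l"
    have "M$k$l \<ge> 0" using M_nonneg by blast
    then show "Bb$k$l \<le> 0" using A_diag kl m_pos by (auto simp: Bb_def Mbar_def)
  qed
  have HB: "hurwitz (- B)" using rob by (simp add: robust_def B_def)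
  note hp = hurwitz_pos[OF ZB HB]
  have dB: "det B \<noteq> 0" and Bu: "B *v u = (\<chi> k. 1)" and upos: "\<forall>k. u$k > 0"
    using hp by (simp_all add: u_def Minv_def)
  have fin: "finite (range (\<lambda>k. u $ k))" by simp
  have uk: "u$k \<le> umax" for k unfolding umax_def using fin by simp
  have "umax \<in> range (\<lambda>k. u $ k)" unfolding umax_def using Min_in fin Max_in by blast
  then have umpos: "umax > 0" using upos by auto
  have lowB: "umax \<le> \<gamma>'" if "robust B \<gamma>'" "\<gamma>' > 0" for \<gamma>'
    using \<open>umax \<in> range (\<lambda>k. u $ k)\<close> robust_lower[OF that Bu] by (auto simp: abs_le_iff)
  have robB: "robust B umax" using robust_upper[OF ZB upos Bu HB] uk by blast
  \<comment> \<open>Sherman--Morrison\<close>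
  have BbM: "(Bb *v z)$k = (B *v z)$k - (if k = i then m * z$j else 0)" for z k
  proof -
    have Bbe: "Bb$k$l = B$k$l - (if k = i \<and> l = j then m else 0)" for l
      by (simp add: Bb_def B_def Mbar_def)
    have "(Bb *v z)$k = (\<Sum>l\<in>UNIV. B$k$l * z$l - (if k = i \<and> l = j then m * z$l else 0))"
      unfolding mv Bbe by (intro sum.cong) (auto simp: left_diff_distrib)
    also have "\<dots> = (B *v z)$k - (if k = i then m * z$j else 0)"
      by (cases "k = i") (simp_all add: sum_subtractf mv)
    finally show ?thesis .
  qed
  define q where "q = (\<chi> k. Minv $ k $ i)"
  have Bq: "(B *v q)$k = (if k = i then 1 else 0)" for k
  proof -
    have "(B *v q)$k = (B ** Minv)$k$i" by (simp add: mv q_def matrix_matrix_mult_def)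
    also have "\<dots> = (if k = i then 1 else 0)" using minv_right(1)[OF dB] by (simp add: Minv_def mat_def)
    finally show ?thesis .
  qed
  have qj: "q$k = Minv$k$i" for k by (simp add: q_def)
  have SM: "1 - m * Minv $ j $ i \<noteq> 0 \<and> Bb *v (\<chi> k. u$k + m / (1 - m * Minv $ j $ i) * Minv $ k $ i * u $ j) = (\<chi> k. 1)"
    if HBb: "hurwitz (- Bb)"
  proof -
    have dBb: "det Bb \<noteq> 0" using hurwitz_pos[OF ZBb HBb] by simp
    have nz: "1 - m * Minv $ j $ i \<noteq> 0"
    proof
      assume z: "1 - m * Minv $ j $ i = 0"
      have "Bb *v q = 0"
        using z by (auto simp: vec_eq_iff BbM Bq qj)
      moreover have "matrix_inv Bb *v (Bb *v q) = q" using minv_right(2)[OF dBb]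
        by (simp add: matrix_vector_mul_assoc)
      ultimately have "q = matrix_inv Bb *v 0" by simp
      then have "q = 0" using \<open>Bb *v q = 0\<close> by simp
      then show False using Bq[of i] by simp
    qed
    define c where "c = m / (1 - m * Minv $ j $ i)"
    have cc: "c * (1 - m * Minv $ j $ i) = m" using nz by (simp add: c_def)
    define w where "w = (\<chi> k. u$k + c * Minv $ k $ i * u $ j)"
    have w: "w = u + (c * u$j) *\<^sub>R q" by (simp add: w_def q_def vec_eq_iff algebra_simps)
    have "(Bb *v w)$k = 1" for k
    proof -
      have "(B *v w)$k = 1 + c * u$j * (if k = i then 1 else 0)"
        using Bu Bq[of k] by (simp add: w matrix_vector_right_distrib matrix_vector_mult_scaleR)
      moreover have "w$j = u$j + c * Minv $ j $ i * u$j" by (simp add: w_def)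
      ultimately have "(Bb *v w)$k = 1 + (if k = i then u$j * (c * (1 - m * Minv $ j $ i) - m) else 0)"
        by (simp add: BbM algebra_simps)
      then show ?thesis using cc by simp
    qed
    then show ?thesis using nz by (simp add: vec_eq_iff w_def c_def)
  qed
  have goal: "scalable B Bb \<longleftrightarrow> hurwitz (- Bb) \<and>
      (\<forall>k. m / (1 - m * Minv $ j $ i) * Minv $ k $ i * u $ j \<le> umax - u $ k)"
  proof
    assume sc: "scalable B Bb"
    have rBb: "robust Bb umax" using sc robB umpos unfolding scalable_def by blast
    then have HBb: "hurwitz (- Bb)" by (simp add: robust_def)
    have "\<forall>k. m / (1 - m * Minv $ j $ i) * Minv $ k $ i * u $ j \<le> umax - u $ k"
    proof
      fix k
      have "\<bar>(\<chi> k. u$k + m / (1 - m * Minv $ j $ i) * Minv $ k $ i * u $ j) $ k\<bar> \<le> umax"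
        using robust_lower[OF rBb umpos] SM[OF HBb] by blast
      then show "m / (1 - m * Minv $ j $ i) * Minv $ k $ i * u $ j \<le> umax - u $ k" by simp
    qed
    then show "hurwitz (- Bb) \<and> (\<forall>k. m / (1 - m * Minv $ j $ i) * Minv $ k $ i * u $ j \<le> umax - u $ k)"
      using HBb by blast
  next
    assume as: "hurwitz (- Bb) \<and> (\<forall>k. m / (1 - m * Minv $ j $ i) * Minv $ k $ i * u $ j \<le> umax - u $ k)"
    then have HBb: "hurwitz (- Bb)" and cond: "\<forall>k. m / (1 - m * Minv $ j $ i) * Minv $ k $ i * u $ j \<le> umax - u $ k"
      by auto
    note hpb = hurwitz_pos[OF ZBb HBb]
    define w where "w = (\<chi> k. u$k + m / (1 - m * Minv $ j $ i) * Minv $ k $ i * u $ j)"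
    have Bbw: "Bb *v w = (\<chi> k. 1)" using SM[OF HBb] by (simp add: w_def)
    have "matrix_inv Bb *v (Bb *v w) = w" using minv_right(2)[OF hpb(1)]
      by (simp add: matrix_vector_mul_assoc)
    then have weq: "w = matrix_inv Bb *v (\<chi> k. 1)" using Bbw by metis
    have wpos: "\<forall>k. w$k > 0" using hpb(3) weq by simp
    have wle: "w$k \<le> umax" for k using cond by (simp add: w_def) (smt (verit))
    show "scalable B Bb" unfolding scalable_def
    proof (intro allI impI)
      fix \<gamma>' :: real assume g: "\<gamma>' > 0" "robust B \<gamma>'"
      have "umax \<le> \<gamma>'" using lowB g by blast
      then have "\<forall>k. w$k \<le> \<gamma>'" using wle order_trans by blast
      then show "robust Bb \<gamma>'" using robust_upper[OF ZBb wpos Bbw HBb] by blast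
    qed
  qed
  show ?thesis unfolding Let_def using goal
    by (simp add: B_def Minv_def u_def umax_def Mbar_def Bb_def)
qed

end
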